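(* Let $d\ge2$ and $p=(\sqrt d+1)^{-1}$, and consider $\mathcal{C}_{\mathrm{PP}},\mathcal{C}_{\mathrm{s}}$ with this $p$ and $\mathcal{C}_{\mathrm{q}}$ (all with variance constant $\omega=\sqrt d$). For a symmetric positive definite $M$ and a random vector $E$ with $\mathbb{E}[EE^\top]=M$ independent of the compression randomness, let $\mathfrak{C}(\mathcal{C},M):=\mathbb{E}[\mathcal{C}(E)\mathcal{C}(E)^\top]$ for $\mathcal{C}\in\{\mathcal{C}_{\mathrm{PP}},\mathcal{C}_{\mathrm{s}}\}$, and $\widetilde{\mathfrak{C}}(\mathcal{C}_{\mathrm{q}},M):=M+\sqrt{\mathrm{Tr}(M)}\sqrt{\mathrm{Diag}(M)}-\mathrm{Diag}(M)$. (1) If $M$ is diagonal: $\mathrm{Tr}(\mathfrak{C}(\mathcal{C}_{\mathrm{PP}},M)M^{-1})=\mathrm{Tr}(\mathfrak{C}(\mathcal{C}_{\mathrm{s}},M)M^{-1})\le(1+\frac1{\sqrt d})\mathrm{Tr}(\widetilde{\mathfrak{C}}(\mathcal{C}_{\mathrm{q}},M)M^{-1})$. (2) If $M$ has constant diagonal: $\widetilde{\mathfrak{C}}(\mathcal{C}_{\mathrm{q}},M)\preccurlyeq\mathfrak{C}(\mathcal{C}_{\mathrm{s}},M)$ and $\mathrm{Tr}(\mathfrak{C}(\mathcal{C}_{\mathrm{PP}},M)M^{-1})\le(1+\frac1{\sqrt d})\mathrm{Tr}(\widetilde{\mathfrak{C}}(\mathcal{C}_{\mathrm{q}},M)M^{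-1})$.
   Context: $\mathcal{C}_{\mathrm{q}}(z)=\|z\|\mathrm{sign}(z)\odot\chi$ with $\chi_i\sim\mathrm{Bern}(|z_i|/\|z\|)$ independent; $\mathcal{C}_{\mathrm{s}}(z)=\frac1pB\odot z$, $B_i$ i.i.d. $\mathrm{Bern}(p)$; $\mathcal{C}_{\mathrm{PP}}(z)=\frac{b_0}pz$, $b_0\sim\mathrm{Bern}(p)$. $\mathrm{Diag}(M)$ is the diagonal part of $M$ and its square root is entrywise. ($\widetilde{\mathfrak{C}}(\mathcal{C}_{\mathrm{q}},M)$ is an upper bound on the covariance of $\mathcal{C}_{\mathrm{q}}(E)$.) *)

theory Defs
  imports "HOL-Analysis.Analysis" "HOL-Probability.Probability"
begin

definition C_PP :: "real \<Rightarrow> real^'n \<Rightarrow> (real^'n) pmf" where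
  "C_PP p z = map_pmf (\<lambda>b. (if b then 1 / p else 0) *\<^sub>R z) (bernoulli_pmf p)"

definition C_s :: "real \<Rightarrow> real^'n::finite \<Rightarrow> (real^'n) pmf" where
  "C_s p z = map_pmf (\<lambda>B. \<chi> i. (if B i then 1 / p else 0) * z $ i)
                     (Pi_pmf UNIV False (\<lambda>_. bernoulli_pmf p))"

text \<open>Second-moment matrix of the compressed random vector C(E), where E ~ mu is
  independent of the compressor randomness.\<close>
definition frakC :: "(real^'n \<Rightarrow> (real^'n) pmf) \<Rightarrow> (real^'n) measure \<Rightarrow> real^'n^'n" where
  "frakC C mu = (\<chi> i j. \<integral>z. measure_pmf.expectation (C z) (\<lambda>c. c $ i * c $ j) \<partial>mu)"

definition Diag :: "real^'n^'n \<Rightarrow> real^'n^'n" where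
  "Diag M = (\<chi> i j. if i = j then M $ i $ j else 0)"

definition sqrt_entry :: "real^'n^'n \<Rightarrow> real^'n^'n" where
  "sqrt_entry M = (\<chi> i j. sqrt (M $ i $ j))"

definition frakC_q_tilde :: "real^'n^'n \<Rightarrow> real^'n^'n" where
  "frakC_q_tilde M = M + sqrt (trace M) *\<^sub>R sqrt_entry (Diag M) - Diag M"

definition sym_pos_def :: "real^'n^'n \<Rightarrow> bool" where
  "sym_pos_def M \<longleftrightarrow> transpose M = M \<and> (\<forall>x. x \<noteq> 0 \<longrightarrow> x \<bullet> (M *v x) > 0)"

definition loewner_le :: "real^'n^'n \<Rightarrow> real^'n^'n \<Rightarrow> bool" where
  "loewner_le A B \<longleftrightarrow> (\<forall>x. x \<bullet> ((B - A) *v x) \<ge> 0)"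

end

theory Submission
  imports Defs
begin

lemma E_PP:
  assumes "0 < p" "p \<le> 1"
  shows "measure_pmf.expectation (C_PP p z) (\<lambda>c. c $ i * c $ j) = z $ i * z $ j / p"
  using assms by (simp add: C_PP_def field_simps power2_eq_square)

lemma E_s:
  fixes z :: "real^'n::finite"
  assumes "0 < p" "p \<le> 1"
  shows "measure_pmf.expectation (C_s p z) (\<lambda>c. c $ i * c $ j) =
     (if i = j then z $ i * z $ j / p else z $ i * z $ j)"
proof -
  define g where "g = (\<lambda>b::bool. if b then 1 / p else (0::real))"
  define P where "P = Pi_pmf (UNIV::'n set) False (\<lambda>_. bernoulli_pmf p)"
  have "measure_pmf.expectation (C_s p z) (\<lambda>c. c $ i * c $ j) =
     measure_pmf.expectation P (\<lambda>B. (g (B i) * z $ i) * (g (B j) * z $ j))"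
    by (simp add: C_s_def P_def g_def)
  also have "\<dots> = (if i = j then z $ i * z $ j / p else z $ i * z $ j)"
  proof (cases "i = j")
    case True
    have "measure_pmf.expectation P (\<lambda>B. (g (B i) * z $ i) * (g (B j) * z $ j))
        = measure_pmf.expectation (map_pmf (\<lambda>B. B i) P) (\<lambda>b. (g b * z $ i) * (g b * z $ j))"
      using True by simp
    also have "map_pmf (\<lambda>B. B i) P = bernoulli_pmf p"
      unfolding P_def by (subst Pi_pmf_component) auto
    finally show ?thesis using True assms by (simp add: g_def field_simps power2_eq_square)
  next
    case False
    have "measure_pmf.expectation P (\<lambda>B. (g (B i) * z $ i) * (g (B j) * z $ j))
       = z $ i * z $ j * measure_pmf.expectation P (\<lambda>B. \<Prod>k\<in>{i,j}. g (B k))"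
      using False by (simp add: algebra_simps)
    also have "measure_pmf.expectation P (\<lambda>B. \<Prod>k\<in>{i,j}. g (B k)) = 
       (\<Prod>k\<in>{i,j}. measure_pmf.expectation (bernoulli_pmf p) g)"
    proof -
      define f where "f = (\<lambda>k b. if k \<in> {i,j} then g b else (1::real))"
      have e1: "(\<lambda>B. \<Prod>k\<in>{i,j}. g (B k)) = (\<lambda>B. \<Prod>k\<in>UNIV. f k (B k))"
      proof
        fix B :: "'n \<Rightarrow> bool"
        have "(\<Prod>k\<in>UNIV. f k (B k)) = (\<Prod>k\<in>UNIV. if k \<in> {i,j} then g (B k) else 1)"
          by (simp add: f_def)
        also have "\<dots> = (\<Prod>k\<in>UNIV \<inter> {i,j}. g (B k))"
          by (rule prod.inter_restrict[symmetric]) simp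
        finally show "(\<Prod>k\<in>{i,j}. g (B k)) = (\<Prod>k\<in>UNIV. f k (B k))" by simp
      qed
      have "measure_pmf.expectation P (\<lambda>B. \<Prod>k\<in>UNIV. f k (B k)) =
          (\<Prod>k\<in>UNIV. measure_pmf.expectation (bernoulli_pmf p) (f k))"
        unfolding P_def
        by (rule expectation_prod_Pi_pmf) (auto simp: f_def g_def assms integrable_measure_pmf_finite less_imp_le)
      also have "\<dots> = (\<Prod>k\<in>UNIV. if k \<in> {i,j} then measure_pmf.expectation (bernoulli_pmf p) g else 1)"
        by (rule prod.cong) (auto simp: f_def)
      also have "\<dots> = (\<Prod>k\<in>{i,j}. measure_pmf.expectation (bernoulli_pmf p) g)"
        by (subst prod.inter_restrict[symmetric]) auto
      finally show ?thesis using e1 by simp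
    qed
    also have "measure_pmf.expectation (bernoulli_pmf p) g = 1"
      using assms by (simp add: g_def)
    finally show ?thesis using False by simp
  qed
  finally show ?thesis .
qed

lemma tangent_ineq:
  fixes x r :: real assumes "x > 0" "r > 0"
  shows "3 / (2 * r) - x^2 / (2 * r^3) \<le> 1 / x"
proof -
  have "0 \<le> (x - r)^2 * (x + 2 * r)" using assms by simp
  hence "3 * r^2 * x - x^3 \<le> 2 * r^3" by (simp add: algebra_simps power2_eq_square power3_eq_cube)
  thus ?thesis using assms by (simp add: field_simps power2_eq_square power3_eq_cube)
qed

lemma power_mean_ineq:
  fixes a :: "'n::finite \<Rightarrow> real"
  assumes pos: "\<And>i. a i > 0"
  shows "real CARD('n) * sqrt (real CARD('n)) \<le> sqrt (\<Sum>i\<in>UNIV. a i) * (\<Sum>i\<in>UNIV. 1 / sqrt (a i))"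
proof -
  define d where "d = real CARD('n)"
  define T where "T = (\<Sum>i\<in>UNIV. a i)"
  have d0: "d > 0" by (simp add: d_def)
  have T0: "T > 0" unfolding T_def using pos by (simp add: sum_pos)
  define r where "r = sqrt (T / d)"
  have r0: "r > 0" using d0 T0 by (simp add: r_def)
  have "(\<Sum>i\<in>UNIV. 3 / (2 * r) - (sqrt (a i))^2 / (2 * r^3)) \<le> (\<Sum>i\<in>UNIV. 1 / sqrt (a i))"
    by (rule sum_mono, rule tangent_ineq) (use pos r0 in auto)
  moreover have "(\<Sum>i\<in>UNIV. 3 / (2 * r) - (sqrt (a i))^2 / (2 * r^3)) = 3 * d / (2 * r) - T / (2 * r^3)"
    using pos by (simp add: sum_subtractf d_def T_def sum_divide_distrib[symmetric] less_imp_le)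
  moreover have "r^2 = T / d" using T0 d0 by (simp add: r_def)
  hence "T / (2 * r^3) = d / (2 * r)" using r0 d0 by (simp add: field_simps power2_eq_square power3_eq_cube)
  ultimately have "d / r \<le> (\<Sum>i\<in>UNIV. 1 / sqrt (a i))" by simp
  moreover have "sqrt T * (d / r) = d * sqrt d"
    using T0 d0 by (simp add: r_def real_sqrt_divide field_simps)
  ultimately have "d * sqrt d \<le> sqrt T * (\<Sum>i\<in>UNIV. 1 / sqrt (a i))"
    by (metis T0 mult_left_mono real_sqrt_ge_zero less_imp_le)
  thus ?thesis by (simp add: d_def T_def)
qed

lemma sym_inner:
  fixes M :: "real^'n^'n"
  assumes "transpose M = M"
  shows "x \<bullet> (M *v y) = y \<bullet> (M *v x)"
proof -
  have "x \<bullet> (M *v y) = (\<Sum>i\<in>UNIV. \<Sum>k\<in>UNIV. x $ i * M $ i $ k * y $ k)"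
    by (simp add: inner_vec_def matrix_vector_mult_def sum_distrib_left mult.assoc)
  also have "\<dots> = (\<Sum>k\<in>UNIV. \<Sum>i\<in>UNIV. x $ i * M $ i $ k * y $ k)" by (rule sum.swap)
  also have "\<dots> = (\<Sum>k\<in>UNIV. \<Sum>i\<in>UNIV. y $ k * M $ k $ i * x $ i)"
  proof -
    have "M $ i $ k = M $ k $ i" for i k
      using assms by (metis transpose_def vec_lambda_beta)
    thus ?thesis by (simp add: mult.commute mult.left_commute)
  qed
  also have "\<dots> = y \<bullet> (M *v x)"
    by (simp add: inner_vec_def matrix_vector_mult_def sum_distrib_left mult.assoc)
  finally show ?thesis .
qed

lemma trace_scale: "trace ((c *\<^sub>R A) ** (N::real^'n^'n)) = c * trace (A ** N)"
  by (simp add: trace_def matrix_matrix_mult_def sum_distrib_left mult.assoc)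

lemma trace_addm: "trace ((A + B) ** (N::real^'n^'n)) = trace (A ** N) + trace (B ** N)"
  by (simp add: trace_def matrix_matrix_mult_def distrib_right sum.distrib)

lemma trace_diag:
  fixes D N :: "real^'n^'n"
  assumes "\<And>i k. i \<noteq> k \<Longrightarrow> D $ i $ k = 0"
  shows "trace (D ** N) = (\<Sum>i\<in>UNIV. D $ i $ i * N $ i $ i)"
proof -
  have "(\<Sum>k\<in>UNIV. D $ i $ k * N $ k $ i) = D $ i $ i * N $ i $ i" for i
  proof -
    have "(\<Sum>k\<in>UNIV. D $ i $ k * N $ k $ i) = (\<Sum>k\<in>UNIV. if k = i then D $ i $ i * N $ i $ i else 0)"
      by (rule sum.cong) (auto simp: assms)
    thus ?thesis by simp
  qed
  thus ?thesis by (simp add: trace_def matrix_matrix_mult_def)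
qed

lemma diag_entry:
  fixes M :: "real^'n^'n"
  shows "axis i 1 \<bullet> (M *v axis i 1) = M $ i $ i"
  proof -
  have "axis i 1 \<bullet> (M *v axis i 1) = (\<Sum>k\<in>UNIV. if k = i then M $ k $ i else 0)"
    unfolding inner_vec_def by (rule sum.cong) (auto simp: matrix_vector_mult_def axis_def mult_ac if_distrib[where f="\<lambda>x. _ * x"] cong: if_cong)
  thus ?thesis by simp
qed

theorem proposition4:
  fixes M :: "real^'n^'n" and mu :: "(real^'n) measure" and p :: real
  assumes d2: "CARD('n) \<ge> 2"
    and p_def: "p = 1 / (sqrt (real CARD('n)) + 1)"
    and M_spd: "sym_pos_def M"
    and mu_prob: "prob_space mu"
    and mu_sets: "sets mu = sets borel"
    and sq_int: "\<And>i. integrable mu (\<lambda>z. (z $ i)\<^sup>2)"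
    and M_moment: "\<And>i j. M $ i $ j = (\<integral>z. z $ i * z $ j \<partial>mu)"
  shows
    "((\<forall>i j. i \<noteq> j \<longrightarrow> M $ i $ j = 0) \<longrightarrow>
        trace (frakC (C_PP p) mu ** matrix_inv M) = trace (frakC (C_s p) mu ** matrix_inv M) \<and>
        trace (frakC (C_s p) mu ** matrix_inv M)
          \<le> (1 + 1 / sqrt (real CARD('n))) * trace (frakC_q_tilde M ** matrix_inv M))
     \<and>
     ((\<exists>c. \<forall>i. M $ i $ i = c) \<longrightarrow>
        loewner_le (frakC_q_tilde M) (frakC (C_s p) mu) \<and>
        trace (frakC (C_PP p) mu ** matrix_inv M)
          \<le> (1 + 1 / sqrt (real CARD('n))) * trace (frakC_q_tilde M ** matrix_inv M))"
proof -
  define d where "d = real CARD('n)"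
  define s where "s = sqrt d"
  have d0: "d \<ge> 2" using d2 by (simp add: d_def)
  have s1: "s \<ge> 1" unfolding s_def using d0 by simp
  have ssq: "s * s = d" unfolding s_def using d0 by simp
  have p_s: "p = 1 / (s + 1)" by (simp add: p_def s_def d_def)
  have p0: "0 < p" "p \<le> 1" using s1 by (auto simp: p_s field_simps)
  have invp: "1 / p = s + 1" by (simp add: p_s)
  have symM: "transpose M = M" and pdM: "\<And>x. x \<noteq> 0 \<Longrightarrow> x \<bullet> (M *v x) > 0"
    using M_spd by (auto simp: sym_pos_def_def)
  define a where "a = (\<lambda>i. M $ i $ i)"
  have a0: "a i > 0" for i
  proof -
    have "axis i (1::real) \<noteq> 0" by (simp add: axis_eq_0_iff)
    from pdM[OF this] show ?thesis using diag_entry[of i M] by (simp add: a_def)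
  qed
  have "\<forall>x. M *v x = 0 \<longrightarrow> x = 0"
  proof (intro allI impI)
    fix x :: "real^'n" assume "M *v x = 0"
    show "x = 0"
    proof (rule ccontr)
      assume "x \<noteq> 0"
      from pdM[OF this] \<open>M *v x = 0\<close> show False by simp
    qed
  qed
  then obtain N where NM: "N ** M = mat 1" using matrix_left_invertible_ker by blast
  hence MN: "M ** N = mat 1" using matrix_left_right_inverse by blast
  have invN: "matrix_inv M = N"
  proof -
    have uniq: "A = N" if "M ** A = mat 1 \<and> A ** M = mat 1" for A
    proof -
      have "A = A ** (M ** N)" by (simp add: MN)
      also have "\<dots> = (A ** M) ** N" by (simp add: matrix_mul_assoc)
      also have "\<dots> = N" using that by simp
      finally show ?thesis .
    qed
    have "M ** (SOME A. M ** A = mat 1 \<and> A ** M = mat 1) = mat 1 \<and>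
          (SOME A. M ** A = mat 1 \<and> A ** M = mat 1) ** M = mat 1"
      by (rule someI[of _ N]) (simp add: MN NM)
    thus ?thesis unfolding matrix_inv_def by (rule uniq)
  qed
  have trMN: "trace (M ** N) = d" by (simp add: MN trace_I d_def)
  have fPP: "frakC (C_PP p) mu = (1 / p) *\<^sub>R M"
    by (simp add: vec_eq_iff frakC_def E_PP[OF p0] M_moment)
  define DS where "DS = (\<chi> i j. if i = j then (s::real) * M $ i $ j else 0)"
  have fS: "frakC (C_s p) mu = M + DS"
  proof -
    have "frakC (C_s p) mu $ i $ j = (M + DS) $ i $ j" for i j
    proof (cases "i = j")
      case True
      have "frakC (C_s p) mu $ i $ j = M $ i $ j / p"
        using True by (simp add: frakC_def E_s[OF p0] M_moment)
      also have "\<dots> = M $ i $ j * (s + 1)" by (simp add: invp[symmetric])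
      finally show ?thesis using True by (simp add: DS_def algebra_simps)
    next
      case False
      thus ?thesis by (simp add: frakC_def E_s[OF p0] M_moment DS_def)
    qed
    thus ?thesis by (simp add: vec_eq_iff)
  qed
  define T where "T = trace M"
  have T_eq: "T = (\<Sum>i\<in>UNIV. a i)" by (simp add: T_def trace_def a_def)
  define DQ where "DQ = (\<chi> i j. if i = j then sqrt T * sqrt (a i) - a i else (0::real))"
  have fQ: "frakC_q_tilde M = M + DQ"
    by (simp add: vec_eq_iff frakC_q_tilde_def DQ_def Diag_def sqrt_entry_def T_def a_def)
  have trPP: "trace (frakC (C_PP p) mu ** matrix_inv M) = (s + 1) * d"
    by (simp add: fPP invN trace_scale trMN invp)
  have trS: "trace (frakC (C_s p) mu ** matrix_inv M) = d + s * (\<Sum>i\<in>UNIV. a i * N $ i $ i)"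
    by (simp add: fS invN trace_addm trMN trace_diag DS_def a_def sum_distrib_left mult.assoc)
  have trQ: "trace (frakC_q_tilde M ** matrix_inv M) = d + (\<Sum>i\<in>UNIV. (sqrt T * sqrt (a i) - a i) * N $ i $ i)"
    by (simp add: fQ invN trace_addm trMN trace_diag DQ_def)
  have part1: "trace (frakC (C_PP p) mu ** matrix_inv M) = trace (frakC (C_s p) mu ** matrix_inv M) \<and>
        trace (frakC (C_s p) mu ** matrix_inv M)
          \<le> (1 + 1 / sqrt (real CARD('n))) * trace (frakC_q_tilde M ** matrix_inv M)"
    if diag: "\<forall>i j. i \<noteq> j \<longrightarrow> M $ i $ j = 0"
  proof -
    have aN: "a i * N $ i $ i = 1" for i
    proof -
      have "(M ** N) $ i $ i = 1" by (simp add: MN mat_def)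
      moreover have "(M ** N) $ i $ i = (\<Sum>k\<in>UNIV. if k = i then a i * N $ i $ i else 0)"
        unfolding matrix_matrix_mult_def vec_lambda_beta by (rule sum.cong) (use diag in \<open>auto simp: a_def\<close>)
      ultimately show ?thesis by simp
    qed
    have Ni: "N $ i $ i = 1 / a i" for i using aN[of i] a0[of i] by (simp add: field_simps)
    have eq1: "trace (frakC (C_s p) mu ** matrix_inv M) = (s + 1) * d"
      using trS aN by (simp add: d_def algebra_simps)
    have "(\<Sum>i\<in>UNIV. (sqrt T * sqrt (a i) - a i) * N $ i $ i) = (\<Sum>i\<in>UNIV. sqrt T * (1 / sqrt (a i)) - 1)"
    proof (rule sum.cong)
      fix i
      have "sqrt (a i) * sqrt (a i) = a i" using a0[of i] by simp
      thus "(sqrt T * sqrt (a i) - a i) * N $ i $ i = sqrt T * (1 / sqrt (a i)) - 1"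
        using a0[of i] by (simp add: Ni field_simps)
    qed simp
    hence trQ': "trace (frakC_q_tilde M ** matrix_inv M) = sqrt T * (\<Sum>i\<in>UNIV. 1 / sqrt (a i))"
      using trQ by (simp add: sum_subtractf sum_distrib_left d_def)
    have key: "d * s \<le> sqrt T * (\<Sum>i\<in>UNIV. 1 / sqrt (a i))"
      using power_mean_ineq[of a] a0 by (simp add: T_eq d_def s_def)
    have "(s + 1) * d = (1 + 1 / s) * (d * s)" using s1 by (simp add: field_simps)
    also have "\<dots> \<le> (1 + 1 / s) * (sqrt T * (\<Sum>i\<in>UNIV. 1 / sqrt (a i)))"
      using key s1 by (intro mult_left_mono) auto
    finally show ?thesis using eq1 trPP trQ' by (simp add: s_def d_def)
  qed
  have part2: "loewner_le (frakC_q_tilde M) (frakC (C_s p) mu) \<and>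
        trace (frakC (C_PP p) mu ** matrix_inv M)
          \<le> (1 + 1 / sqrt (real CARD('n))) * trace (frakC_q_tilde M ** matrix_inv M)"
    if hc: "\<exists>c. \<forall>i. M $ i $ i = c"
  proof -
    obtain c where c: "\<And>i. a i = c" using hc by (auto simp: a_def)
    have mc: "\<And>i. M $ i $ i = c" using c by (simp add: a_def)
    have c0: "c > 0" using a0 c by metis
    have Tc: "T = d * c" by (simp add: T_eq c d_def)
    have sTc: "sqrt T * sqrt c = s * c"
      using c0 d0 by (simp add: Tc s_def real_sqrt_mult)
    have diff: "frakC (C_s p) mu - frakC_q_tilde M = c *\<^sub>R mat 1"
      by (simp add: fS fQ vec_eq_iff DS_def DQ_def mat_def c sTc mc)
    have lw: "loewner_le (frakC_q_tilde M) (frakC (C_s p) mu)"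
      unfolding loewner_le_def diff using c0 by (simp add: scaleR_matrix_vector_assoc[symmetric])
    have Nii: "N $ i $ i \<ge> 1 / c" for i
    proof -
      define u :: "real^'n" where "u = axis i 1"
      define v where "v = N *v u"
      have Mv: "M *v v = u" by (simp add: v_def matrix_vector_mul_assoc MN)
      have uMu: "u \<bullet> (M *v u) = c" using diag_entry[of i M] c by (simp add: u_def a_def)
      have vu: "v \<bullet> u = N $ i $ i"
        by (simp add: v_def u_def inner_axis matrix_vector_mult_basis column_def)
      have uu: "u \<bullet> u = 1" by (simp add: u_def)
      have vMu: "v \<bullet> (M *v u) = 1" using sym_inner[OF symM, of v u] Mv uu by simp
      define t where "t = 1 / c"
      define x where "x = v - t *\<^sub>R u"
      have "0 \<le> x \<bullet> (M *v x)"
        using pdM[of x] by (cases "x = 0") auto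
      also have "x \<bullet> (M *v x) = N $ i $ i - t - t + t * t * c"
        unfolding x_def
        by (simp add: matrix_vector_mult_diff_distrib scaleR_matrix_vector_assoc[symmetric]
             inner_diff_left inner_diff_right Mv vu uu uMu vMu inner_commute[of u v] algebra_simps)
      finally show ?thesis using c0 by (simp add: t_def field_simps)
    qed
    have sumN: "(\<Sum>i\<in>UNIV. N $ i $ i) \<ge> d / c"
    proof -
      have "(\<Sum>i\<in>(UNIV::'n set). 1 / c) \<le> (\<Sum>i\<in>UNIV. N $ i $ i)" by (rule sum_mono) (use Nii in auto)
      thus ?thesis by (simp add: d_def)
    qed
    have trQ': "trace (frakC_q_tilde M ** matrix_inv M) = d + (s * c - c) * (\<Sum>i\<in>UNIV. N $ i $ i)"
      using trQ by (simp add: c sTc sum_distrib_left)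
    have "(s * c - c) * (d / c) \<le> (s * c - c) * (\<Sum>i\<in>UNIV. N $ i $ i)"
      using sumN s1 c0 by (intro mult_left_mono) auto
    moreover have "(s * c - c) * (d / c) = (s - 1) * d" using c0 by (simp add: field_simps)
    ultimately have "(s - 1) * d \<le> (s * c - c) * (\<Sum>i\<in>UNIV. N $ i $ i)" by simp
    hence "d * s \<le> trace (frakC_q_tilde M ** matrix_inv M)" using trQ' by (simp add: algebra_simps)
    hence "(1 + 1 / s) * (d * s) \<le> (1 + 1 / s) * trace (frakC_q_tilde M ** matrix_inv M)"
      using s1 by (intro mult_left_mono) auto
    moreover have "(s + 1) * d = (1 + 1 / s) * (d * s)" using s1 by (simp add: field_simps)
    ultimately have "trace (frakC (C_PP p) mu ** matrix_inv M) \<le> (1 + 1 / s) * trace (frakC_q_tilde M ** matrix_inv M)"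
      using trPP by linarith
    thus ?thesis using lw by (simp add: s_def d_def)
  qed
  show ?thesis using part1 part2 by blast
qed

end
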